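(* Let $(\mathscr{C},\mathbb{E},\mathfrak{s})$ be an extriangulated category such that for every object $X$ the morphism $X\to 0$ is an $\mathbb{E}$-inflation and $0\to X$ is an $\mathbb{E}$-deflation, and let $\Sigma\colon\mathscr{C}\to\mathscr{C}$ be the functor constructed in the context. Then $\Sigma$ is an additive auto-equivalence of $\mathscr{C}$.
   Context: An extriangulated category $(\mathscr{C},\mathbb{E},\mathfrak{s})$ is in the sense of Nakaoka–Palu: $\mathscr{C}$ additive, $\mathbb{E}\colon\mathscr{C}^{\mathrm{op}}\times\mathscr{C}\to Ab$ biadditive, $\mathfrak{s}$ an additive realisation assigning to $\delta\in\mathbb{E}(C,A)$ an equivalence class of sequences $[A\to B\to C]$, satisfying (ET1)–(ET4)$^{\mathrm{op}}$. For $a\colon A\to A'$ and $c\colon C'\to C$ write $a_*\delta=\mathbb{E}(C,a)(\delta)$ and $c^*\delta=\mathbb{E}(c,A)(\delta)$. A morphism $x\colon A\to B$ is an $\mathbb{E}$-inflation if $\mathfrak{s}(\delta)=[A\xrightarrow{x}B\to C]$ for some $\delta\in\mathbb{E}(C,A)$; dually $y\colon B\to C$ is an $\mathbb{E}$-deflation if $\mathfrak{s}(\delta)=[A\to B\xrightarrow{y}C]$ for some $\delta$. Construction of $\Sigma$: for each object $X$, choose an object $\Sigma X$ and $\delta_X\in\mathbb{E}(\Sigma X,X)$ with $\mathfrak{s}(\delta_X)=[X\to 0\to\Sigma X]$. For a morphism $f\colon X\to Y$, $\Sigma f\colon\Sigma X\to\Sigma Y$ is the unique morphism with $f_*\delta_X=(\Sigma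 f)^*\delta_Y$; this defines a functor. *)

theory Defs
  imports Main
begin

text \<open>
  An extriangulated category (Nakaoka--Palu) with explicit carriers.
  Objects have type 'o, morphisms type 'm, elements of the groups E(C,A) type 'e.
  cmp g f is the composite g o f.  Ext C A is E(C,A).
  push a d is a_* d and pull c d is c^* d.
  real d B x y means that the sequence A -x-> B -y-> C belongs to the class s(d).
\<close>

record ('o,'m,'e) extri =
  Ob    :: "'o set"
  Hom   :: "'o \<Rightarrow> 'o \<Rightarrow> 'm set"
  cmp   :: "'m \<Rightarrow> 'm \<Rightarrow> 'm"
  ident :: "'o \<Rightarrow> 'm"
  madd  :: "'m \<Rightarrow> 'm \<Rightarrow> 'm"
  mzero :: "'o \<Rightarrow> 'o \<Rightarrow> 'm"
  mneg  :: "'m \<Rightarrow> 'm"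
  Ext   :: "'o \<Rightarrow> 'o \<Rightarrow> 'e set"
  eadd  :: "'e \<Rightarrow> 'e \<Rightarrow> 'e"
  ezero :: "'o \<Rightarrow> 'o \<Rightarrow> 'e"
  eneg  :: "'e \<Rightarrow> 'e"
  push  :: "'m \<Rightarrow> 'e \<Rightarrow> 'e"
  pull  :: "'m \<Rightarrow> 'e \<Rightarrow> 'e"
  real  :: "'e \<Rightarrow> 'o \<Rightarrow> 'm \<Rightarrow> 'm \<Rightarrow> bool"

definition is_category :: "('o,'m,'e) extri \<Rightarrow> bool" where
  "is_category K \<longleftrightarrow>
     (\<forall>X\<in>Ob K. ident K X \<in> Hom K X X) \<and>
     (\<forall>X\<in>Ob K. \<forall>Y\<in>Ob K. \<forall>Z\<in>Ob K. \<forall>f\<in>Hom K X Y. \<forall>g\<in>Hom K Y Z.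
         cmp K g f \<in> Hom K X Z) \<and>
     (\<forall>X\<in>Ob K. \<forall>Y\<in>Ob K. \<forall>f\<in>Hom K X Y.
         cmp K (ident K Y) f = f \<and> cmp K f (ident K X) = f) \<and>
     (\<forall>W\<in>Ob K. \<forall>X\<in>Ob K. \<forall>Y\<in>Ob K. \<forall>Z\<in>Ob K.
       \<forall>f\<in>Hom K W X. \<forall>g\<in>Hom K X Y. \<forall>h\<in>Hom K Y Z.
         cmp K h (cmp K g f) = cmp K (cmp K h g) f) \<and>
     (\<forall>X\<in>Ob K. \<forall>Y\<in>Ob K. \<forall>X'\<in>Ob K. \<forall>Y'\<in>Ob K.
         Hom K X Y \<inter> Hom K X' Y' \<noteq> {} \<longrightarrow> X = X' \<and> Y = Y')"

definition is_iso :: "('o,'m,'e) extri \<Rightarrow> 'o \<Rightarrow> 'o \<Rightarrow> 'm \<Rightarrow> bool" where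
  "is_iso K X Y f \<longleftrightarrow> f \<in> Hom K X Y \<and>
     (\<exists>g\<in>Hom K Y X. cmp K g f = ident K X \<and> cmp K f g = ident K Y)"

definition is_preadditive :: "('o,'m,'e) extri \<Rightarrow> bool" where
  "is_preadditive K \<longleftrightarrow>
     (\<forall>X\<in>Ob K. \<forall>Y\<in>Ob K.
        mzero K X Y \<in> Hom K X Y \<and>
        (\<forall>f\<in>Hom K X Y. \<forall>g\<in>Hom K X Y. madd K f g \<in> Hom K X Y) \<and>
        (\<forall>f\<in>Hom K X Y. mneg K f \<in> Hom K X Y) \<and>
        (\<forall>f\<in>Hom K X Y. \<forall>g\<in>Hom K X Y. \<forall>h\<in>Hom K X Y.
            madd K (madd K f g) h = madd K f (madd K g h)) \<and>
        (\<forall>f\<in>Hom K X Y. \<forall>g\<in>Hom K X Y. madd K f g = madd K g f) \<and>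
        (\<forall>f\<in>Hom K X Y. madd K f (mzero K X Y) = f) \<and>
        (\<forall>f\<in>Hom K X Y. madd K f (mneg K f) = mzero K X Y)) \<and>
     (\<forall>X\<in>Ob K. \<forall>Y\<in>Ob K. \<forall>Z\<in>Ob K.
        (\<forall>f\<in>Hom K X Y. \<forall>g\<in>Hom K Y Z. \<forall>g'\<in>Hom K Y Z.
            cmp K (madd K g g') f = madd K (cmp K g f) (cmp K g' f)) \<and>
        (\<forall>f\<in>Hom K X Y. \<forall>f'\<in>Hom K X Y. \<forall>g\<in>Hom K Y Z.
            cmp K g (madd K f f') = madd K (cmp K g f) (cmp K g f')))"

definition is_zero_obj :: "('o,'m,'e) extri \<Rightarrow> 'o \<Rightarrow> bool" where
  "is_zero_obj K Z \<longleftrightarrow> Z \<in> Ob K \<and>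
     (\<forall>X\<in>Ob K. (\<exists>!f. f \<in> Hom K Z X) \<and> (\<exists>!f. f \<in> Hom K X Z))"

definition is_biproduct ::
  "('o,'m,'e) extri \<Rightarrow> 'o \<Rightarrow> 'o \<Rightarrow> 'o \<Rightarrow> 'm \<Rightarrow> 'm \<Rightarrow> 'm \<Rightarrow> 'm \<Rightarrow> bool" where
  "is_biproduct K A B S i1 p1 i2 p2 \<longleftrightarrow> S \<in> Ob K \<and>
     i1 \<in> Hom K A S \<and> p1 \<in> Hom K S A \<and> i2 \<in> Hom K B S \<and> p2 \<in> Hom K S B \<and>
     cmp K p1 i1 = ident K A \<and> cmp K p2 i2 = ident K B \<and>
     cmp K p1 i2 = mzero K B A \<and> cmp K p2 i1 = mzero K A B \<and>
     madd K (cmp K i1 p1) (cmp K i2 p2) = ident K S"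

definition is_additive :: "('o,'m,'e) extri \<Rightarrow> bool" where
  "is_additive K \<longleftrightarrow> is_category K \<and> is_preadditive K \<and>
     (\<exists>Z. is_zero_obj K Z) \<and>
     (\<forall>A\<in>Ob K. \<forall>B\<in>Ob K. \<exists>S i1 p1 i2 p2. is_biproduct K A B S i1 p1 i2 p2)"

definition is_biadditive_E :: "('o,'m,'e) extri \<Rightarrow> bool" where
  "is_biadditive_E K \<longleftrightarrow>
     (\<forall>C\<in>Ob K. \<forall>A\<in>Ob K.
        ezero K C A \<in> Ext K C A \<and>
        (\<forall>d\<in>Ext K C A. \<forall>e\<in>Ext K C A. eadd K d e \<in> Ext K C A) \<and>
        (\<forall>d\<in>Ext K C A. eneg K d \<in> Ext K C A) \<and>
        (\<forall>d\<in>Ext K C A. \<forall>e\<in>Ext K C A. \<forall>h\<in>Ext K C A.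
            eadd K (eadd K d e) h = eadd K d (eadd K e h)) \<and>
        (\<forall>d\<in>Ext K C A. \<forall>e\<in>Ext K C A. eadd K d e = eadd K e d) \<and>
        (\<forall>d\<in>Ext K C A. eadd K d (ezero K C A) = d) \<and>
        (\<forall>d\<in>Ext K C A. eadd K d (eneg K d) = ezero K C A) \<and>
        (\<forall>d\<in>Ext K C A. push K (ident K A) d = d \<and> pull K (ident K C) d = d)) \<and>
     (\<forall>C\<in>Ob K. \<forall>A\<in>Ob K. \<forall>A'\<in>Ob K. \<forall>a\<in>Hom K A A'. \<forall>d\<in>Ext K C A.
        push K a d \<in> Ext K C A') \<and>
     (\<forall>C\<in>Ob K. \<forall>C'\<in>Ob K. \<forall>A\<in>Ob K. \<forall>c\<in>Hom K C' C. \<forall>d\<in>Ext K C A.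
        pull K c d \<in> Ext K C' A) \<and>
     (\<forall>C\<in>Ob K. \<forall>A\<in>Ob K. \<forall>A'\<in>Ob K. \<forall>A''\<in>Ob K.
        \<forall>a\<in>Hom K A A'. \<forall>a'\<in>Hom K A' A''. \<forall>d\<in>Ext K C A.
        push K (cmp K a' a) d = push K a' (push K a d)) \<and>
     (\<forall>C\<in>Ob K. \<forall>C'\<in>Ob K. \<forall>C''\<in>Ob K. \<forall>A\<in>Ob K.
        \<forall>c\<in>Hom K C' C. \<forall>c'\<in>Hom K C'' C'. \<forall>d\<in>Ext K C A.
        pull K (cmp K c c') d = pull K c' (pull K c d)) \<and>
     (\<forall>C\<in>Ob K. \<forall>C'\<in>Ob K. \<forall>A\<in>Ob K. \<forall>A'\<in>Ob K.
        \<forall>a\<in>Hom K A A'. \<forall>c\<in>Hom K C' C. \<forall>d\<in>Ext K C A.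
        push K a (pull K c d) = pull K c (push K a d)) \<and>
     (\<forall>C\<in>Ob K. \<forall>A\<in>Ob K. \<forall>A'\<in>Ob K. \<forall>a\<in>Hom K A A'.
        \<forall>d\<in>Ext K C A. \<forall>e\<in>Ext K C A.
        push K a (eadd K d e) = eadd K (push K a d) (push K a e)) \<and>
     (\<forall>C\<in>Ob K. \<forall>C'\<in>Ob K. \<forall>A\<in>Ob K. \<forall>c\<in>Hom K C' C.
        \<forall>d\<in>Ext K C A. \<forall>e\<in>Ext K C A.
        pull K c (eadd K d e) = eadd K (pull K c d) (pull K c e)) \<and>
     (\<forall>C\<in>Ob K. \<forall>A\<in>Ob K. \<forall>A'\<in>Ob K. \<forall>a\<in>Hom K A A'. \<forall>b\<in>Hom K A A'.
        \<forall>d\<in>Ext K C A. push K (madd K a b) d = eadd K (push K a d) (push K b d)) \<and>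
     (\<forall>C\<in>Ob K. \<forall>C'\<in>Ob K. \<forall>A\<in>Ob K. \<forall>c\<in>Hom K C' C. \<forall>c'\<in>Hom K C' C.
        \<forall>d\<in>Ext K C A. pull K (madd K c c') d = eadd K (pull K c d) (pull K c' d))"

definition seq_equiv ::
  "('o,'m,'e) extri \<Rightarrow> 'o \<Rightarrow> 'm \<Rightarrow> 'm \<Rightarrow> 'o \<Rightarrow> 'm \<Rightarrow> 'm \<Rightarrow> bool" where
  "seq_equiv K B x y B' x' y' \<longleftrightarrow>
     (\<exists>b. is_iso K B B' b \<and> cmp K b x = x' \<and> cmp K y' b = y)"

text \<open>s(d) is an equivalence class of sequences A -> B -> C, for every d in E(C,A).\<close>
definition is_class_assignment :: "('o,'m,'e) extri \<Rightarrow> bool" where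
  "is_class_assignment K \<longleftrightarrow>
     (\<forall>C\<in>Ob K. \<forall>A\<in>Ob K. \<forall>d\<in>Ext K C A.
        (\<forall>B x y. real K d B x y \<longrightarrow> B \<in> Ob K \<and> x \<in> Hom K A B \<and> y \<in> Hom K B C) \<and>
        (\<exists>B x y. real K d B x y) \<and>
        (\<forall>B x y B' x' y'. real K d B x y \<and> real K d B' x' y' \<longrightarrow>
            seq_equiv K B x y B' x' y') \<and>
        (\<forall>B x y B' x' y'. real K d B x y \<and> B' \<in> Ob K \<and> x' \<in> Hom K A B' \<and>
            y' \<in> Hom K B' C \<and> seq_equiv K B x y B' x' y' \<longrightarrow> real K d B' x' y'))"

definition is_realisation :: "('o,'m,'e) extri \<Rightarrow> bool" where
  "is_realisation K \<longleftrightarrow> is_class_assignment K \<and>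
     (\<forall>A\<in>Ob K. \<forall>C\<in>Ob K. \<forall>A'\<in>Ob K. \<forall>C'\<in>Ob K.
      \<forall>d\<in>Ext K C A. \<forall>d'\<in>Ext K C' A'. \<forall>a\<in>Hom K A A'. \<forall>c\<in>Hom K C C'.
      \<forall>B x y B' x' y'.
        push K a d = pull K c d' \<and> real K d B x y \<and> real K d' B' x' y' \<longrightarrow>
        (\<exists>b\<in>Hom K B B'. cmp K b x = cmp K x' a \<and> cmp K y' b = cmp K c y))"

definition is_additive_realisation :: "('o,'m,'e) extri \<Rightarrow> bool" where
  "is_additive_realisation K \<longleftrightarrow> is_realisation K \<and>
     (\<forall>A\<in>Ob K. \<forall>C\<in>Ob K. \<forall>S i1 p1 i2 p2.
        is_biproduct K A C S i1 p1 i2 p2 \<longrightarrow> real K (ezero K C A) S i1 p2) \<and>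
     (\<forall>A\<in>Ob K. \<forall>C\<in>Ob K. \<forall>A'\<in>Ob K. \<forall>C'\<in>Ob K.
      \<forall>d\<in>Ext K C A. \<forall>d'\<in>Ext K C' A'.
      \<forall>B x y B' x' y' SA iA pA iA' pA' SB iB pB iB' pB' SC iC pC iC' pC'.
        real K d B x y \<and> real K d' B' x' y' \<and>
        is_biproduct K A A' SA iA pA iA' pA' \<and>
        is_biproduct K B B' SB iB pB iB' pB' \<and>
        is_biproduct K C C' SC iC pC iC' pC' \<longrightarrow>
        real K (eadd K (push K iA (pull K pC d)) (push K iA' (pull K pC' d')))
          SB
          (madd K (cmp K iB (cmp K x pA)) (cmp K iB' (cmp K x' pA')))
          (madd K (cmp K iC (cmp K y pB)) (cmp K iC' (cmp K y' pB'))))"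

definition ET3 :: "('o,'m,'e) extri \<Rightarrow> bool" where
  "ET3 K \<longleftrightarrow>
     (\<forall>A\<in>Ob K. \<forall>C\<in>Ob K. \<forall>A'\<in>Ob K. \<forall>C'\<in>Ob K.
      \<forall>d\<in>Ext K C A. \<forall>d'\<in>Ext K C' A'. \<forall>B x y B' x' y'. \<forall>a\<in>Hom K A A'. \<forall>b\<in>Hom K B B'.
        real K d B x y \<and> real K d' B' x' y' \<and> cmp K b x = cmp K x' a \<longrightarrow>
        (\<exists>c\<in>Hom K C C'. cmp K c y = cmp K y' b \<and> push K a d = pull K c d'))"

definition ET3op :: "('o,'m,'e) extri \<Rightarrow> bool" where
  "ET3op K \<longleftrightarrow>
     (\<forall>A\<in>Ob K. \<forall>C\<in>Ob K. \<forall>A'\<in>Ob K. \<forall>C'\<in>Ob K.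
      \<forall>d\<in>Ext K C A. \<forall>d'\<in>Ext K C' A'. \<forall>B x y B' x' y'. \<forall>b\<in>Hom K B B'. \<forall>c\<in>Hom K C C'.
        real K d B x y \<and> real K d' B' x' y' \<and> cmp K c y = cmp K y' b \<longrightarrow>
        (\<exists>a\<in>Hom K A A'. cmp K b x = cmp K x' a \<and> push K a d = pull K c d'))"

definition ET4 :: "('o,'m,'e) extri \<Rightarrow> bool" where
  "ET4 K \<longleftrightarrow>
     (\<forall>A\<in>Ob K. \<forall>B\<in>Ob K. \<forall>C\<in>Ob K. \<forall>D\<in>Ob K. \<forall>F\<in>Ob K.
      \<forall>d\<in>Ext K D A. \<forall>d'\<in>Ext K F B. \<forall>f f' g g'.
        real K d B f f' \<and> real K d' C g g' \<longrightarrow>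
        (\<exists>E\<in>Ob K. \<exists>h'\<in>Hom K C E. \<exists>dd\<in>Hom K D E. \<exists>e\<in>Hom K E F. \<exists>d''\<in>Ext K E A.
           real K d'' C (cmp K g f) h' \<and>
           real K (push K f' d') E dd e \<and>
           pull K dd d'' = d \<and> push K f d'' = pull K e d' \<and>
           cmp K dd f' = cmp K h' g \<and> cmp K e h' = g'))"

definition ET4op :: "('o,'m,'e) extri \<Rightarrow> bool" where
  "ET4op K \<longleftrightarrow>
     (\<forall>A\<in>Ob K. \<forall>B\<in>Ob K. \<forall>C\<in>Ob K. \<forall>D\<in>Ob K. \<forall>F\<in>Ob K.
      \<forall>d\<in>Ext K A D. \<forall>d'\<in>Ext K B F. \<forall>f f' g g'.
        real K d B f' f \<and> real K d' C g' g \<longrightarrow>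
        (\<exists>E\<in>Ob K. \<exists>h'\<in>Hom K E C. \<exists>dd\<in>Hom K E D. \<exists>e\<in>Hom K F E. \<exists>d''\<in>Ext K A E.
           real K d'' C h' (cmp K f g) \<and>
           real K (pull K f' d') E e dd \<and>
           push K dd d'' = d \<and> pull K f d'' = push K e d' \<and>
           cmp K f' dd = cmp K g h' \<and> cmp K h' e = g'))"

definition extriangulated :: "('o,'m,'e) extri \<Rightarrow> bool" where
  "extriangulated K \<longleftrightarrow> is_additive K \<and> is_biadditive_E K \<and>
     is_additive_realisation K \<and> ET3 K \<and> ET3op K \<and> ET4 K \<and> ET4op K"

definition is_inflation :: "('o,'m,'e) extri \<Rightarrow> 'o \<Rightarrow> 'o \<Rightarrow> 'm \<Rightarrow> bool" where
  "is_inflation K A B x \<longleftrightarrow> x \<in> Hom K A B \<and>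
     (\<exists>C\<in>Ob K. \<exists>d\<in>Ext K C A. \<exists>y. real K d B x y)"

definition is_deflation :: "('o,'m,'e) extri \<Rightarrow> 'o \<Rightarrow> 'o \<Rightarrow> 'm \<Rightarrow> bool" where
  "is_deflation K B C y \<longleftrightarrow> y \<in> Hom K B C \<and>
     (\<exists>A\<in>Ob K. \<exists>d\<in>Ext K C A. \<exists>x. real K d B x y)"

definition is_endofunctor ::
  "('o,'m,'e) extri \<Rightarrow> ('o \<Rightarrow> 'o) \<Rightarrow> ('o \<Rightarrow> 'o \<Rightarrow> 'm \<Rightarrow> 'm) \<Rightarrow> bool" where
  "is_endofunctor K F0 F1 \<longleftrightarrow>
     (\<forall>X\<in>Ob K. F0 X \<in> Ob K) \<and>
     (\<forall>X\<in>Ob K. \<forall>Y\<in>Ob K. \<forall>f\<in>Hom K X Y. F1 X Y f \<in> Hom K (F0 X) (F0 Y)) \<and>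
     (\<forall>X\<in>Ob K. F1 X X (ident K X) = ident K (F0 X)) \<and>
     (\<forall>X\<in>Ob K. \<forall>Y\<in>Ob K. \<forall>Z\<in>Ob K. \<forall>f\<in>Hom K X Y. \<forall>g\<in>Hom K Y Z.
        F1 X Z (cmp K g f) = cmp K (F1 Y Z g) (F1 X Y f))"

definition is_additive_endofunctor ::
  "('o,'m,'e) extri \<Rightarrow> ('o \<Rightarrow> 'o) \<Rightarrow> ('o \<Rightarrow> 'o \<Rightarrow> 'm \<Rightarrow> 'm) \<Rightarrow> bool" where
  "is_additive_endofunctor K F0 F1 \<longleftrightarrow> is_endofunctor K F0 F1 \<and>
     (\<forall>X\<in>Ob K. \<forall>Y\<in>Ob K. \<forall>f\<in>Hom K X Y. \<forall>g\<in>Hom K X Y.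
        F1 X Y (madd K f g) = madd K (F1 X Y f) (F1 X Y g))"

definition is_autoequivalence ::
  "('o,'m,'e) extri \<Rightarrow> ('o \<Rightarrow> 'o) \<Rightarrow> ('o \<Rightarrow> 'o \<Rightarrow> 'm \<Rightarrow> 'm) \<Rightarrow> bool" where
  "is_autoequivalence K F0 F1 \<longleftrightarrow> is_endofunctor K F0 F1 \<and>
     (\<exists>G0 G1 eta eps. is_endofunctor K G0 G1 \<and>
        (\<forall>X\<in>Ob K. is_iso K X (G0 (F0 X)) (eta X)) \<and>
        (\<forall>X\<in>Ob K. \<forall>Y\<in>Ob K. \<forall>f\<in>Hom K X Y.
           cmp K (eta Y) f = cmp K (G1 (F0 X) (F0 Y) (F1 X Y f)) (eta X)) \<and>
        (\<forall>X\<in>Ob K. is_iso K (F0 (G0 X)) X (eps X)) \<and>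
        (\<forall>X\<in>Ob K. \<forall>Y\<in>Ob K. \<forall>f\<in>Hom K X Y.
           cmp K (eps Y) (F1 (G0 X) (G0 Y) (G1 X Y f)) = cmp K f (eps X)))"

definition SigmaMor ::
  "('o,'m,'e) extri \<Rightarrow> ('o \<Rightarrow> 'o) \<Rightarrow> ('o \<Rightarrow> 'e) \<Rightarrow> 'o \<Rightarrow> 'o \<Rightarrow> 'm \<Rightarrow> 'm" where
  "SigmaMor K Sig dl X Y f =
     (THE g. g \<in> Hom K (Sig X) (Sig Y) \<and> push K f (dl X) = pull K g (dl Y))"

end

theory Submission
  imports Defs
begin

locale ext = fixes K :: "('o,'m,'e) extri" assumes ext: "extriangulated K"
begin

lemma cat: "is_category K" using ext unfolding extriangulated_def is_additive_def by (meson)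
lemma padd: "is_preadditive K" using ext unfolding extriangulated_def is_additive_def by (meson)
lemma bia: "is_biadditive_E K" using ext unfolding extriangulated_def by (meson)
lemma arl: "is_additive_realisation K" using ext unfolding extriangulated_def by (meson)
lemma rl: "is_realisation K" using arl unfolding is_additive_realisation_def by (meson)
lemma ca: "is_class_assignment K" using rl unfolding is_realisation_def by (meson)

lemma ident_hom: "X\<in>Ob K \<Longrightarrow> ident K X \<in> Hom K X X" using cat unfolding is_category_def by (meson)
lemma comp_hom: "X\<in>Ob K \<Longrightarrow> Y\<in>Ob K \<Longrightarrow> Z\<in>Ob K \<Longrightarrow> f\<in>Hom K X Y \<Longrightarrow> g\<in>Hom K Y Z \<Longrightarrow> cmp K g f \<in> Hom K X Z"
  using cat unfolding is_category_def by (meson)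
lemma id_l: "X\<in>Ob K \<Longrightarrow> Y\<in>Ob K \<Longrightarrow> f\<in>Hom K X Y \<Longrightarrow> cmp K (ident K Y) f = f"
  using cat unfolding is_category_def by (meson)
lemma id_r: "X\<in>Ob K \<Longrightarrow> Y\<in>Ob K \<Longrightarrow> f\<in>Hom K X Y \<Longrightarrow> cmp K f (ident K X) = f"
  using cat unfolding is_category_def by (meson)
lemma assoc: "W\<in>Ob K \<Longrightarrow> X\<in>Ob K \<Longrightarrow> Y\<in>Ob K \<Longrightarrow> Z\<in>Ob K \<Longrightarrow> f\<in>Hom K W X \<Longrightarrow> g\<in>Hom K X Y \<Longrightarrow> h\<in>Hom K Y Z \<Longrightarrow>
   cmp K h (cmp K g f) = cmp K (cmp K h g) f"
  using cat unfolding is_category_def by (meson)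

lemma zero_hom: "X\<in>Ob K \<Longrightarrow> Y\<in>Ob K \<Longrightarrow> mzero K X Y \<in> Hom K X Y" using padd unfolding is_preadditive_def by (meson)
lemma add_hom: "X\<in>Ob K \<Longrightarrow> Y\<in>Ob K \<Longrightarrow> f\<in>Hom K X Y \<Longrightarrow> g\<in>Hom K X Y \<Longrightarrow> madd K f g \<in> Hom K X Y" using padd unfolding is_preadditive_def by (meson)
lemma neg_hom: "X\<in>Ob K \<Longrightarrow> Y\<in>Ob K \<Longrightarrow> f\<in>Hom K X Y \<Longrightarrow> mneg K f \<in> Hom K X Y" using padd unfolding is_preadditive_def by (meson)
lemma add_assoc: "X\<in>Ob K \<Longrightarrow> Y\<in>Ob K \<Longrightarrow> f\<in>Hom K X Y \<Longrightarrow> g\<in>Hom K X Y \<Longrightarrow> h\<in>Hom K X Y \<Longrightarrow> madd K (madd K f g) h = madd K f (madd K g h)" using padd unfolding is_preadditive_def by (meson)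
lemma add_comm: "X\<in>Ob K \<Longrightarrow> Y\<in>Ob K \<Longrightarrow> f\<in>Hom K X Y \<Longrightarrow> g\<in>Hom K X Y \<Longrightarrow> madd K f g = madd K g f" using padd unfolding is_preadditive_def by (meson)
lemma add_zero: "X\<in>Ob K \<Longrightarrow> Y\<in>Ob K \<Longrightarrow> f\<in>Hom K X Y \<Longrightarrow> madd K f (mzero K X Y) = f" using padd unfolding is_preadditive_def by (meson)
lemma add_neg: "X\<in>Ob K \<Longrightarrow> Y\<in>Ob K \<Longrightarrow> f\<in>Hom K X Y \<Longrightarrow> madd K f (mneg K f) = mzero K X Y" using padd unfolding is_preadditive_def by (meson)
lemma comp_add_r: "X\<in>Ob K \<Longrightarrow> Y\<in>Ob K \<Longrightarrow> Z\<in>Ob K \<Longrightarrow> f\<in>Hom K X Y \<Longrightarrow> f'\<in>Hom K X Y \<Longrightarrow> g\<in>Hom K Y Z \<Longrightarrow>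
  cmp K g (madd K f f') = madd K (cmp K g f) (cmp K g f')" using padd unfolding is_preadditive_def by (meson)

lemma ezero_in: "C\<in>Ob K \<Longrightarrow> A\<in>Ob K \<Longrightarrow> ezero K C A \<in> Ext K C A" using bia unfolding is_biadditive_E_def by (meson)
lemma eadd_in: "C\<in>Ob K \<Longrightarrow> A\<in>Ob K \<Longrightarrow> d\<in>Ext K C A \<Longrightarrow> e\<in>Ext K C A \<Longrightarrow> eadd K d e \<in> Ext K C A" using bia unfolding is_biadditive_E_def by (meson)
lemma eneg_in: "C\<in>Ob K \<Longrightarrow> A\<in>Ob K \<Longrightarrow> d\<in>Ext K C A \<Longrightarrow> eneg K d \<in> Ext K C A" using bia unfolding is_biadditive_E_def by (meson)
lemma eadd_assoc: "C\<in>Ob K \<Longrightarrow> A\<in>Ob K \<Longrightarrow> d\<in>Ext K C A \<Longrightarrow> e\<in>Ext K C A \<Longrightarrow> h\<in>Ext K C A \<Longrightarrow> eadd K (eadd K d e) h = eadd K d (eadd K e h)" using bia unfolding is_biadditive_E_def by (meson)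
lemma eadd_zero: "C\<in>Ob K \<Longrightarrow> A\<in>Ob K \<Longrightarrow> d\<in>Ext K C A \<Longrightarrow> eadd K d (ezero K C A) = d" using bia unfolding is_biadditive_E_def by (meson)
lemma eadd_neg: "C\<in>Ob K \<Longrightarrow> A\<in>Ob K \<Longrightarrow> d\<in>Ext K C A \<Longrightarrow> eadd K d (eneg K d) = ezero K C A" using bia unfolding is_biadditive_E_def by (meson)
lemma push_id: "C\<in>Ob K \<Longrightarrow> A\<in>Ob K \<Longrightarrow> d\<in>Ext K C A \<Longrightarrow> push K (ident K A) d = d" using bia unfolding is_biadditive_E_def by (meson)
lemma pull_id: "C\<in>Ob K \<Longrightarrow> A\<in>Ob K \<Longrightarrow> d\<in>Ext K C A \<Longrightarrow> pull K (ident K C) d = d" using bia unfolding is_biadditive_E_def by (meson)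
lemma push_in: "C\<in>Ob K \<Longrightarrow> A\<in>Ob K \<Longrightarrow> A'\<in>Ob K \<Longrightarrow> a\<in>Hom K A A' \<Longrightarrow> d\<in>Ext K C A \<Longrightarrow> push K a d \<in> Ext K C A'" using bia unfolding is_biadditive_E_def by (meson)
lemma pull_in: "C\<in>Ob K \<Longrightarrow> C'\<in>Ob K \<Longrightarrow> A\<in>Ob K \<Longrightarrow> c\<in>Hom K C' C \<Longrightarrow> d\<in>Ext K C A \<Longrightarrow> pull K c d \<in> Ext K C' A" using bia unfolding is_biadditive_E_def by (meson)
lemma push_comp: "C\<in>Ob K \<Longrightarrow> A\<in>Ob K \<Longrightarrow> A'\<in>Ob K \<Longrightarrow> A''\<in>Ob K \<Longrightarrow> a\<in>Hom K A A' \<Longrightarrow> a'\<in>Hom K A' A'' \<Longrightarrow> d\<in>Ext K C A \<Longrightarrow>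
  push K (cmp K a' a) d = push K a' (push K a d)" using bia unfolding is_biadditive_E_def by (meson)
lemma pull_comp: "C\<in>Ob K \<Longrightarrow> C'\<in>Ob K \<Longrightarrow> C''\<in>Ob K \<Longrightarrow> A\<in>Ob K \<Longrightarrow> c\<in>Hom K C' C \<Longrightarrow> c'\<in>Hom K C'' C' \<Longrightarrow> d\<in>Ext K C A \<Longrightarrow>
  pull K (cmp K c c') d = pull K c' (pull K c d)" using bia unfolding is_biadditive_E_def by (meson)
lemma push_pull: "C\<in>Ob K \<Longrightarrow> C'\<in>Ob K \<Longrightarrow> A\<in>Ob K \<Longrightarrow> A'\<in>Ob K \<Longrightarrow> a\<in>Hom K A A' \<Longrightarrow> c\<in>Hom K C' C \<Longrightarrow> d\<in>Ext K C A \<Longrightarrow>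
  push K a (pull K c d) = pull K c (push K a d)" using bia unfolding is_biadditive_E_def by (meson)
lemma push_madd: "C\<in>Ob K \<Longrightarrow> A\<in>Ob K \<Longrightarrow> A'\<in>Ob K \<Longrightarrow> a\<in>Hom K A A' \<Longrightarrow> b\<in>Hom K A A' \<Longrightarrow> d\<in>Ext K C A \<Longrightarrow>
  push K (madd K a b) d = eadd K (push K a d) (push K b d)" using bia unfolding is_biadditive_E_def by (meson)
lemma pull_madd: "C\<in>Ob K \<Longrightarrow> C'\<in>Ob K \<Longrightarrow> A\<in>Ob K \<Longrightarrow> c\<in>Hom K C' C \<Longrightarrow> c'\<in>Hom K C' C \<Longrightarrow> d\<in>Ext K C A \<Longrightarrow>
  pull K (madd K c c') d = eadd K (pull K c d) (pull K c' d)" using bia unfolding is_biadditive_E_def by (meson)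

lemma real_hom: "C\<in>Ob K \<Longrightarrow> A\<in>Ob K \<Longrightarrow> d\<in>Ext K C A \<Longrightarrow> real K d B x y \<Longrightarrow> B \<in> Ob K \<and> x \<in> Hom K A B \<and> y \<in> Hom K B C"
  using ca unfolding is_class_assignment_def by (meson)
lemma real_mor: "A\<in>Ob K \<Longrightarrow> C\<in>Ob K \<Longrightarrow> A'\<in>Ob K \<Longrightarrow> C'\<in>Ob K \<Longrightarrow> d\<in>Ext K C A \<Longrightarrow> d'\<in>Ext K C' A' \<Longrightarrow> a\<in>Hom K A A' \<Longrightarrow> c\<in>Hom K C C' \<Longrightarrow>
   push K a d = pull K c d' \<Longrightarrow> real K d B x y \<Longrightarrow> real K d' B' x' y' \<Longrightarrow>
   (\<exists>b\<in>Hom K B B'. cmp K b x = cmp K x' a \<and> cmp K y' b = cmp K c y)"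
  using rl unfolding is_realisation_def by (meson)
lemma split_real: "A\<in>Ob K \<Longrightarrow> C\<in>Ob K \<Longrightarrow> is_biproduct K A C S i1 p1 i2 p2 \<Longrightarrow> real K (ezero K C A) S i1 p2"
  using arl unfolding is_additive_realisation_def by (meson)
lemma biprod_ex: "A\<in>Ob K \<Longrightarrow> B\<in>Ob K \<Longrightarrow> \<exists>S i1 p1 i2 p2. is_biproduct K A B S i1 p1 i2 p2"
  using ext unfolding extriangulated_def is_additive_def by (meson)
lemma zero_ex: "\<exists>Z. is_zero_obj K Z"
  using ext unfolding extriangulated_def is_additive_def by (meson)
lemma et3: "A\<in>Ob K \<Longrightarrow> C\<in>Ob K \<Longrightarrow> A'\<in>Ob K \<Longrightarrow> C'\<in>Ob K \<Longrightarrow> d\<in>Ext K C A \<Longrightarrow> d'\<in>Ext K C' A' \<Longrightarrow> a\<in>Hom K A A' \<Longrightarrow> b\<in>Hom K B B' \<Longrightarrow>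
   real K d B x y \<Longrightarrow> real K d' B' x' y' \<Longrightarrow> cmp K b x = cmp K x' a \<Longrightarrow>
   (\<exists>c\<in>Hom K C C'. cmp K c y = cmp K y' b \<and> push K a d = pull K c d')"
  using ext unfolding extriangulated_def ET3_def by (meson)
lemma et3op: "A\<in>Ob K \<Longrightarrow> C\<in>Ob K \<Longrightarrow> A'\<in>Ob K \<Longrightarrow> C'\<in>Ob K \<Longrightarrow> d\<in>Ext K C A \<Longrightarrow> d'\<in>Ext K C' A' \<Longrightarrow> b\<in>Hom K B B' \<Longrightarrow> c\<in>Hom K C C' \<Longrightarrow>
   real K d B x y \<Longrightarrow> real K d' B' x' y' \<Longrightarrow> cmp K c y = cmp K y' b \<Longrightarrow>
   (\<exists>a\<in>Hom K A A'. cmp K b x = cmp K x' a \<and> push K a d = pull K c d')"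
  using ext unfolding extriangulated_def ET3op_def by (meson)

end

context ext begin

lemma zero_obj_Ob: "is_zero_obj K Z \<Longrightarrow> Z \<in> Ob K" unfolding is_zero_obj_def by blast
lemma zero_from_uniq: "is_zero_obj K Z \<Longrightarrow> X\<in>Ob K \<Longrightarrow> u\<in>Hom K Z X \<Longrightarrow> v\<in>Hom K Z X \<Longrightarrow> u = v"
  unfolding is_zero_obj_def by metis
lemma zero_to_uniq: "is_zero_obj K Z \<Longrightarrow> X\<in>Ob K \<Longrightarrow> u\<in>Hom K X Z \<Longrightarrow> v\<in>Hom K X Z \<Longrightarrow> u = v"
  unfolding is_zero_obj_def by metis

lemma idem_zero: assumes "X\<in>Ob K" "Y\<in>Ob K" "w\<in>Hom K X Y" "madd K w w = w" shows "w = mzero K X Y"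
proof -
  have "mzero K X Y = madd K w (mneg K w)" using add_neg assms by simp
  also have "\<dots> = madd K (madd K w w) (mneg K w)" using assms by simp
  also have "\<dots> = madd K w (madd K w (mneg K w))" by (rule add_assoc[OF assms(1-3,3) neg_hom[OF assms(1-3)]])
  also have "\<dots> = w" using add_neg add_zero assms by simp
  finally show ?thesis by simp
qed

lemma eidem_zero: assumes "C\<in>Ob K" "A\<in>Ob K" "w\<in>Ext K C A" "eadd K w w = w" shows "w = ezero K C A"
proof -
  have "ezero K C A = eadd K w (eneg K w)" using eadd_neg assms by simp
  also have "\<dots> = eadd K (eadd K w w) (eneg K w)" using assms by simp
  also have "\<dots> = eadd K w (eadd K w (eneg K w))" by (rule eadd_assoc[OF assms(1-3,3) eneg_in[OF assms(1-3)]])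
  also have "\<dots> = w" using eadd_neg eadd_zero assms by simp
  finally show ?thesis by simp
qed

lemma comp_zero: assumes "X\<in>Ob K" "Y\<in>Ob K" "Z\<in>Ob K" "g\<in>Hom K Y Z"
  shows "cmp K g (mzero K X Y) = mzero K X Z"
proof -
  let ?w = "cmp K g (mzero K X Y)"
  have w: "?w \<in> Hom K X Z" using comp_hom zero_hom assms by blast
  have "madd K (mzero K X Y) (mzero K X Y) = mzero K X Y" using add_zero zero_hom assms by blast
  hence "madd K ?w ?w = ?w" using comp_add_r[of X Y Z "mzero K X Y" "mzero K X Y" g] zero_hom assms by simp
  thus ?thesis using idem_zero w assms by blast
qed

lemma through_zero: assumes "is_zero_obj K Z" "X\<in>Ob K" "Y\<in>Ob K" "u\<in>Hom K X Z" "v\<in>Hom K Z Y"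
  shows "cmp K v u = mzero K X Y"
proof -
  have Z: "Z \<in> Ob K" using assms zero_obj_Ob by blast
  have "u = mzero K X Z" using zero_to_uniq zero_hom assms Z by blast
  thus ?thesis using comp_zero assms Z by blast
qed

lemma pull_zero: assumes "C\<in>Ob K" "C'\<in>Ob K" "A\<in>Ob K" "d\<in>Ext K C A"
  shows "pull K (mzero K C' C) d = ezero K C' A"
proof -
  let ?w = "pull K (mzero K C' C) d"
  have w: "?w \<in> Ext K C' A" using pull_in zero_hom assms by blast
  have "madd K (mzero K C' C) (mzero K C' C) = mzero K C' C" using add_zero zero_hom assms by blast
  hence "eadd K ?w ?w = ?w" using pull_madd[of C C' A "mzero K C' C" "mzero K C' C" d] zero_hom assms by simp
  thus ?thesis using eidem_zero w assms by blast
qed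

lemma push_zero: assumes "C\<in>Ob K" "A'\<in>Ob K" "A\<in>Ob K" "d\<in>Ext K C A"
  shows "push K (mzero K A A') d = ezero K C A'"
proof -
  let ?w = "push K (mzero K A A') d"
  have w: "?w \<in> Ext K C A'" using push_in zero_hom assms by blast
  have "madd K (mzero K A A') (mzero K A A') = mzero K A A'" using add_zero zero_hom assms by blast
  hence "eadd K ?w ?w = ?w" using push_madd[of C A A' "mzero K A A'" "mzero K A A'" d] zero_hom assms by simp
  thus ?thesis using eidem_zero w assms by blast
qed

lemma pull_ezero_imp: assumes "C\<in>Ob K" "A\<in>Ob K" "C'\<in>Ob K" "d\<in>Ext K C A" "is_zero_obj K Z" "real K d Z x y"
  "c\<in>Hom K C' C" "pull K c d = ezero K C' A"
  shows "c = mzero K C' C"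
proof -
  have Z: "Z \<in> Ob K" using assms(5) zero_obj_Ob by blast
  have xy: "x \<in> Hom K A Z" "y \<in> Hom K Z C" using real_hom[OF assms(1,2,4,6)] by auto
  obtain S i1 p1 i2 p2 where bp: "is_biproduct K A C' S i1 p1 i2 p2" using biprod_ex assms(2,3) by blast
  have S: "S\<in>Ob K" "i1 \<in> Hom K A S" "p1 \<in> Hom K S A" "i2 \<in> Hom K C' S" "p2 \<in> Hom K S C'" "cmp K p2 i2 = ident K C'"
    using bp unfolding is_biproduct_def by auto
  have r0: "real K (ezero K C' A) S i1 p2" using split_real[OF assms(2,3) bp] .
  have "push K (ident K A) (ezero K C' A) = pull K c d" using push_id[OF assms(3,2) ezero_in[OF assms(3,2)]] assms(8) by simp
  from real_mor[OF assms(2,3,2,1) ezero_in[OF assms(3,2)] assms(4) ident_hom[OF assms(2)] assms(7) this r0 assms(6)]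
  obtain b where b: "b\<in>Hom K S Z" "cmp K y b = cmp K c p2" by blast
  have bi: "cmp K b i2 \<in> Hom K C' Z" using comp_hom[OF assms(3) S(1) Z S(4) b(1)] .
  have "c = cmp K c (cmp K p2 i2)" using S(6) id_r[OF assms(3,1,7)] by simp
  also have "\<dots> = cmp K (cmp K c p2) i2" using assoc[OF assms(3) S(1) assms(3,1) S(4,5) assms(7)] .
  also have "\<dots> = cmp K (cmp K y b) i2" using b by simp
  also have "\<dots> = cmp K y (cmp K b i2)" using assoc[OF assms(3) S(1) Z assms(1) S(4) b(1) xy(2)] by simp
  also have "\<dots> = mzero K C' C" using through_zero[OF assms(5,3,1) bi xy(2)] .
  finally show ?thesis .
qed

lemma push_ezero_imp: assumes "C\<in>Ob K" "A\<in>Ob K" "A'\<in>Ob K" "d\<in>Ext K C A" "is_zero_obj K Z" "real K d Z x y"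
  "a\<in>Hom K A A'" "push K a d = ezero K C A'"
  shows "a = mzero K A A'"
proof -
  have Z: "Z \<in> Ob K" using assms(5) zero_obj_Ob by blast
  have xy: "x \<in> Hom K A Z" "y \<in> Hom K Z C" using real_hom[OF assms(1,2,4,6)] by auto
  obtain S i1 p1 i2 p2 where bp: "is_biproduct K A' C S i1 p1 i2 p2" using biprod_ex assms(3,1) by blast
  have S: "S\<in>Ob K" "i1 \<in> Hom K A' S" "p1 \<in> Hom K S A'" "i2 \<in> Hom K C S" "p2 \<in> Hom K S C" "cmp K p1 i1 = ident K A'"
    using bp unfolding is_biproduct_def by auto
  have r0: "real K (ezero K C A') S i1 p2" using split_real[OF assms(3,1) bp] .
  have "push K a d = pull K (ident K C) (ezero K C A')" using pull_id[OF assms(1,3) ezero_in[OF assms(1,3)]] assms(8) by simp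
  from real_mor[OF assms(2,1,3,1) assms(4) ezero_in[OF assms(1,3)] assms(7) ident_hom[OF assms(1)] this assms(6) r0]
  obtain b where b: "b\<in>Hom K Z S" "cmp K b x = cmp K i1 a" by blast
  have pb: "cmp K p1 b \<in> Hom K Z A'" using comp_hom[OF Z S(1) assms(3) b(1) S(3)] .
  have "a = cmp K (cmp K p1 i1) a" using S(6) id_l[OF assms(2,3,7)] by simp
  also have "\<dots> = cmp K p1 (cmp K i1 a)" using assoc[OF assms(2,3) S(1) assms(3) assms(7) S(2,3)] by simp
  also have "\<dots> = cmp K p1 (cmp K b x)" using b by simp
  also have "\<dots> = cmp K (cmp K p1 b) x" using assoc[OF assms(2) Z S(1) assms(3) xy(1) b(1) S(3)] .
  also have "\<dots> = mzero K A A'" using through_zero[OF assms(5,2,3) xy(1) pb] .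
  finally show ?thesis .
qed

lemma cancel_hom: assumes "X\<in>Ob K" "Y\<in>Ob K" "g\<in>Hom K X Y" "g'\<in>Hom K X Y" "madd K g (mneg K g') = mzero K X Y"
  shows "g = g'"
proof -
  have n: "mneg K g' \<in> Hom K X Y" using neg_hom assms by blast
  have "g' = madd K g' (madd K g (mneg K g'))" using assms add_zero by simp
  also have "\<dots> = madd K (madd K g' g) (mneg K g')" using add_assoc assms n by simp
  also have "\<dots> = madd K (madd K g g') (mneg K g')" using add_comm assms by simp
  also have "\<dots> = madd K g (madd K g' (mneg K g'))" using add_assoc assms n by simp
  also have "\<dots> = g" using add_neg add_zero assms by simp
  finally show ?thesis by simp
qed

lemma pull_inj: assumes "C\<in>Ob K" "A\<in>Ob K" "C'\<in>Ob K" "d\<in>Ext K C A" "is_zero_obj K Z" "real K d Z x y"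
  "g\<in>Hom K C' C" "g'\<in>Hom K C' C" "pull K g d = pull K g' d"
  shows "g = g'"
proof -
  have n: "mneg K g' \<in> Hom K C' C" using neg_hom assms by blast
  have "pull K (madd K g (mneg K g')) d = eadd K (pull K g d) (pull K (mneg K g') d)"
    using pull_madd assms n by blast
  also have "\<dots> = eadd K (pull K g' d) (pull K (mneg K g') d)" using assms by simp
  also have "\<dots> = pull K (madd K g' (mneg K g')) d" using pull_madd assms n by simp
  also have "\<dots> = ezero K C' A" using add_neg pull_zero assms by simp
  finally have "madd K g (mneg K g') = mzero K C' C"
    using pull_ezero_imp[of C A C' d Z x y] assms n add_hom by blast
  thus ?thesis using cancel_hom assms by blast
qed

lemma push_inj: assumes "C\<in>Ob K" "A\<in>Ob K" "A'\<in>Ob K" "d\<in>Ext K C A" "is_zero_obj K Z" "real K d Z x y"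
  "g\<in>Hom K A A'" "g'\<in>Hom K A A'" "push K g d = push K g' d"
  shows "g = g'"
proof -
  have n: "mneg K g' \<in> Hom K A A'" using neg_hom assms by blast
  have "push K (madd K g (mneg K g')) d = eadd K (push K g d) (push K (mneg K g') d)"
    using push_madd assms n by blast
  also have "\<dots> = eadd K (push K g' d) (push K (mneg K g') d)" using assms by simp
  also have "\<dots> = push K (madd K g' (mneg K g')) d" using push_madd assms n by simp
  also have "\<dots> = ezero K C A'" using add_neg push_zero assms by simp
  finally have "madd K g (mneg K g') = mzero K A A'"
    using push_ezero_imp[of C A A' d Z x y] assms n add_hom by blast
  thus ?thesis using cancel_hom assms by blast
qed

end

context ext begin

lemma equiv_crit:
  assumes fnc: "is_endofunctor K F0 F1"
  and full: "\<And>X Y g. X\<in>Ob K \<Longrightarrow> Y\<in>Ob K \<Longrightarrow> g\<in>Hom K (F0 X) (F0 Y) \<Longrightarrow> \<exists>f\<in>Hom K X Y. F1 X Y f = g"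
  and faith: "\<And>X Y f f'. X\<in>Ob K \<Longrightarrow> Y\<in>Ob K \<Longrightarrow> f\<in>Hom K X Y \<Longrightarrow> f'\<in>Hom K X Y \<Longrightarrow> F1 X Y f = F1 X Y f' \<Longrightarrow> f = f'"
  and es: "\<And>Y. Y\<in>Ob K \<Longrightarrow> \<exists>X\<in>Ob K. \<exists>e. is_iso K (F0 X) Y e"
  shows "is_autoequivalence K F0 F1"
proof -
  have F0: "\<And>X. X\<in>Ob K \<Longrightarrow> F0 X \<in> Ob K" using fnc unfolding is_endofunctor_def by blast
  have F1: "\<And>X Y f. X\<in>Ob K \<Longrightarrow> Y\<in>Ob K \<Longrightarrow> f\<in>Hom K X Y \<Longrightarrow> F1 X Y f \<in> Hom K (F0 X) (F0 Y)"
    using fnc unfolding is_endofunctor_def by blast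
  have F1id: "\<And>X. X\<in>Ob K \<Longrightarrow> F1 X X (ident K X) = ident K (F0 X)"
    using fnc unfolding is_endofunctor_def by blast
  have F1c: "\<And>X Y Z f g. X\<in>Ob K \<Longrightarrow> Y\<in>Ob K \<Longrightarrow> Z\<in>Ob K \<Longrightarrow> f\<in>Hom K X Y \<Longrightarrow> g\<in>Hom K Y Z \<Longrightarrow>
        F1 X Z (cmp K g f) = cmp K (F1 Y Z g) (F1 X Y f)"
    using fnc unfolding is_endofunctor_def by blast
  have "\<forall>Y\<in>Ob K. \<exists>p. fst p \<in> Ob K \<and> fst (snd p) \<in> Hom K (F0 (fst p)) Y \<and> snd (snd p) \<in> Hom K Y (F0 (fst p)) \<and>
      cmp K (snd (snd p)) (fst (snd p)) = ident K (F0 (fst p)) \<and> cmp K (fst (snd p)) (snd (snd p)) = ident K Y"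
  proof
    fix Y assume "Y \<in> Ob K"
    then obtain X e where "X\<in>Ob K" "is_iso K (F0 X) Y e" using es by blast
    then obtain g where "e \<in> Hom K (F0 X) Y" "g\<in>Hom K Y (F0 X)" "cmp K g e = ident K (F0 X)" "cmp K e g = ident K Y"
      unfolding is_iso_def by blast
    thus "\<exists>p. fst p \<in> Ob K \<and> fst (snd p) \<in> Hom K (F0 (fst p)) Y \<and> snd (snd p) \<in> Hom K Y (F0 (fst p)) \<and>
      cmp K (snd (snd p)) (fst (snd p)) = ident K (F0 (fst p)) \<and> cmp K (fst (snd p)) (snd (snd p)) = ident K Y"
      using \<open>X\<in>Ob K\<close> by (intro exI[of _ "(X,e,g)"]) simp
  qed
  then obtain P where P: "\<forall>Y\<in>Ob K. fst (P Y) \<in> Ob K \<and> fst (snd (P Y)) \<in> Hom K (F0 (fst (P Y))) Y \<and> snd (snd (P Y)) \<in> Hom K Y (F0 (fst (P Y))) \<and>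
      cmp K (snd (snd (P Y))) (fst (snd (P Y))) = ident K (F0 (fst (P Y))) \<and> cmp K (fst (snd (P Y))) (snd (snd (P Y))) = ident K Y"
    by metis
  define G0 where "G0 Y = fst (P Y)" for Y
  define eps where "eps Y = fst (snd (P Y))" for Y
  define epsi where "epsi Y = snd (snd (P Y))" for Y
  have G0: "\<And>Y. Y\<in>Ob K \<Longrightarrow> G0 Y \<in> Ob K" using P unfolding G0_def by auto
  have GF0: "\<And>Y. Y\<in>Ob K \<Longrightarrow> F0 (G0 Y) \<in> Ob K" using G0 F0 by blast
  have eps: "\<And>Y. Y\<in>Ob K \<Longrightarrow> eps Y \<in> Hom K (F0 (G0 Y)) Y" using P unfolding G0_def eps_def by auto
  have epsi: "\<And>Y. Y\<in>Ob K \<Longrightarrow> epsi Y \<in> Hom K Y (F0 (G0 Y))" using P unfolding G0_def epsi_def by auto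
  have ee1: "\<And>Y. Y\<in>Ob K \<Longrightarrow> cmp K (epsi Y) (eps Y) = ident K (F0 (G0 Y))" using P unfolding G0_def eps_def epsi_def by auto
  have ee2: "\<And>Y. Y\<in>Ob K \<Longrightarrow> cmp K (eps Y) (epsi Y) = ident K Y" using P unfolding G0_def eps_def epsi_def by auto
  define pre where "pre X Y g = (THE f. f \<in> Hom K X Y \<and> F1 X Y f = g)" for X Y g
  have pre: "pre X Y g \<in> Hom K X Y \<and> F1 X Y (pre X Y g) = g" if "X\<in>Ob K" "Y\<in>Ob K" "g\<in>Hom K (F0 X) (F0 Y)" for X Y g
  proof -
    have "\<exists>!f. f \<in> Hom K X Y \<and> F1 X Y f = g" using full[OF that] faith[OF that(1,2)] by blast
    thus ?thesis unfolding pre_def by (rule theI')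
  qed
  have preF: "pre X Y (F1 X Y f) = f" if "X\<in>Ob K" "Y\<in>Ob K" "f\<in>Hom K X Y" for X Y f
    using pre[OF that(1,2) F1[OF that]] faith[OF that(1,2) _ that(3)] by blast
  have faithE: "f = f'" if "X\<in>Ob K" "Y\<in>Ob K" "f\<in>Hom K X Y" "f'\<in>Hom K X Y" "F1 X Y f = F1 X Y f'" for X Y f f'
    using faith that by blast
  define G1 where "G1 Y Y' g = pre (G0 Y) (G0 Y') (cmp K (epsi Y') (cmp K g (eps Y)))" for Y Y' g
  have inner: "cmp K (epsi Y') (cmp K g (eps Y)) \<in> Hom K (F0 (G0 Y)) (F0 (G0 Y'))"
    if "Y\<in>Ob K" "Y'\<in>Ob K" "g\<in>Hom K Y Y'" for Y Y' g
    by (meson comp_hom eps epsi GF0 that)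
  have G1: "G1 Y Y' g \<in> Hom K (G0 Y) (G0 Y') \<and> F1 (G0 Y) (G0 Y') (G1 Y Y' g) = cmp K (epsi Y') (cmp K g (eps Y))"
    if "Y\<in>Ob K" "Y'\<in>Ob K" "g\<in>Hom K Y Y'" for Y Y' g
    unfolding G1_def using pre[OF G0[OF that(1)] G0[OF that(2)] inner[OF that]] .
  define eta where "eta X = pre X (G0 (F0 X)) (epsi (F0 X))" for X
  have eta: "eta X \<in> Hom K X (G0 (F0 X)) \<and> F1 X (G0 (F0 X)) (eta X) = epsi (F0 X)" if "X\<in>Ob K" for X
    unfolding eta_def using pre[OF that G0[OF F0[OF that]] epsi[OF F0[OF that]]] .
  define etai where "etai X = pre (G0 (F0 X)) X (eps (F0 X))" for X
  have etai: "etai X \<in> Hom K (G0 (F0 X)) X \<and> F1 (G0 (F0 X)) X (etai X) = eps (F0 X)" if "X\<in>Ob K" for X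
    unfolding etai_def using pre[OF G0[OF F0[OF that]] that eps[OF F0[OF that]]] .
  have Gfun: "is_endofunctor K G0 G1"
    unfolding is_endofunctor_def
  proof (intro conjI ballI)
    fix X assume X: "X\<in>Ob K"
    show "G0 X \<in> Ob K" using G0 X .
    have "cmp K (epsi X) (cmp K (ident K X) (eps X)) = ident K (F0 (G0 X))"
      using id_l[OF GF0[OF X] X eps[OF X]] ee1[OF X] by simp
    hence "G1 X X (ident K X) = pre (G0 X) (G0 X) (F1 (G0 X) (G0 X) (ident K (G0 X)))"
      unfolding G1_def using F1id[OF G0[OF X]] by simp
    thus "G1 X X (ident K X) = ident K (G0 X)" using preF[OF G0[OF X] G0[OF X] ident_hom[OF G0[OF X]]] by simp
  next
    fix X Y f assume X: "X\<in>Ob K" and Y: "Y\<in>Ob K" and f: "f\<in>Hom K X Y"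
    show "G1 X Y f \<in> Hom K (G0 X) (G0 Y)" using G1[OF X Y f] by blast
  next
    fix X Y Z f g assume X: "X\<in>Ob K" and Y: "Y\<in>Ob K" and Z: "Z\<in>Ob K" and f: "f\<in>Hom K X Y" and g: "g\<in>Hom K Y Z"
    have gf: "cmp K g f \<in> Hom K X Z" using comp_hom X Y Z f g by blast
    note Gf = G1[OF X Y f] and Gg = G1[OF Y Z g] and Ggf = G1[OF X Z gf]
    have GX: "F0 (G0 X) \<in> Ob K" and GY: "F0 (G0 Y) \<in> Ob K" and GZ: "F0 (G0 Z) \<in> Ob K" using GF0 X Y Z by auto
    have "F1 (G0 X) (G0 Z) (cmp K (G1 Y Z g) (G1 X Y f)) = cmp K (F1 (G0 Y) (G0 Z) (G1 Y Z g)) (F1 (G0 X) (G0 Y) (G1 X Y f))"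
      using F1c[OF G0[OF X] G0[OF Y] G0[OF Z]] Gf Gg by blast
    also have "\<dots> = cmp K (cmp K (epsi Z) (cmp K g (eps Y))) (cmp K (epsi Y) (cmp K f (eps X)))" using Gf Gg by simp
    also have "\<dots> = cmp K (epsi Z) (cmp K (cmp K g f) (eps X))"
    proof -
      have e1: "cmp K g (eps Y) \<in> Hom K (F0 (G0 Y)) Z" using comp_hom GY Y Z eps g by blast
      have e2: "cmp K f (eps X) \<in> Hom K (F0 (G0 X)) Y" using comp_hom GX X Y eps f by blast
      have e3: "cmp K (epsi Y) (cmp K f (eps X)) \<in> Hom K (F0 (G0 X)) (F0 (G0 Y))" using comp_hom GX Y GY e2 epsi by blast
      have "cmp K (cmp K (epsi Z) (cmp K g (eps Y))) (cmp K (epsi Y) (cmp K f (eps X)))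
          = cmp K (epsi Z) (cmp K (cmp K g (eps Y)) (cmp K (epsi Y) (cmp K f (eps X))))"
        using assoc[OF GX GY Z GZ e3 e1 epsi[OF Z]] by simp
      also have "cmp K (cmp K g (eps Y)) (cmp K (epsi Y) (cmp K f (eps X))) = cmp K g (cmp K (eps Y) (cmp K (epsi Y) (cmp K f (eps X))))"
        using assoc[OF GX GY Y Z e3 eps[OF Y] g] by simp
      also have "cmp K (eps Y) (cmp K (epsi Y) (cmp K f (eps X))) = cmp K (cmp K (eps Y) (epsi Y)) (cmp K f (eps X))"
        using assoc[OF GX Y GY Y e2 epsi[OF Y] eps[OF Y]] .
      also have "\<dots> = cmp K f (eps X)" using ee2[OF Y] id_l[OF GX Y e2] by simp
      also have "cmp K g (cmp K f (eps X)) = cmp K (cmp K g f) (eps X)" using assoc[OF GX X Y Z eps[OF X] f g] .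
      finally show ?thesis .
    qed
    also have "\<dots> = F1 (G0 X) (G0 Z) (G1 X Z (cmp K g f))" using Ggf by simp
    finally show "G1 X Z (cmp K g f) = cmp K (G1 Y Z g) (G1 X Y f)"
      using faithE[OF G0[OF X] G0[OF Z]] Ggf comp_hom[OF G0[OF X] G0[OF Y] G0[OF Z]] Gf Gg by metis
  qed
  show ?thesis unfolding is_autoequivalence_def
  proof (intro conjI exI ballI)
    show "is_endofunctor K F0 F1" by (rule fnc)
    show "is_endofunctor K G0 G1" by (rule Gfun)
  next
    fix X assume X: "X\<in>Ob K"
    have FX: "F0 X \<in> Ob K" using F0 X .
    have GFX: "G0 (F0 X) \<in> Ob K" using G0 FX .
    have FGFX: "F0 (G0 (F0 X)) \<in> Ob K" using F0 GFX .
    have c1: "cmp K (etai X) (eta X) = ident K X"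
    proof -
      have h: "cmp K (etai X) (eta X) \<in> Hom K X X" using comp_hom[OF X GFX X] eta[OF X] etai[OF X] by blast
      have "F1 X X (cmp K (etai X) (eta X)) = cmp K (eps (F0 X)) (epsi (F0 X))"
        using F1c[OF X GFX X] eta[OF X] etai[OF X] by simp
      also have "\<dots> = F1 X X (ident K X)" using ee2[OF FX] F1id[OF X] by simp
      finally show ?thesis using faithE[OF X X h ident_hom[OF X]] by blast
    qed
    have c2: "cmp K (eta X) (etai X) = ident K (G0 (F0 X))"
    proof -
      have h: "cmp K (eta X) (etai X) \<in> Hom K (G0 (F0 X)) (G0 (F0 X))" using comp_hom[OF GFX X GFX] eta[OF X] etai[OF X] by blast
      have "F1 (G0 (F0 X)) (G0 (F0 X)) (cmp K (eta X) (etai X)) = cmp K (epsi (F0 X)) (eps (F0 X))"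
        using F1c[OF GFX X GFX] eta[OF X] etai[OF X] by simp
      also have "\<dots> = F1 (G0 (F0 X)) (G0 (F0 X)) (ident K (G0 (F0 X)))" using ee1[OF FX] F1id[OF GFX] by simp
      finally show ?thesis using faithE[OF GFX GFX h ident_hom[OF GFX]] by blast
    qed
    show "is_iso K X (G0 (F0 X)) (eta X)" unfolding is_iso_def using eta[OF X] etai[OF X] c1 c2 by blast
  next
    fix X Y f assume X: "X\<in>Ob K" and Y: "Y\<in>Ob K" and f: "f\<in>Hom K X Y"
    have FX: "F0 X \<in> Ob K" and FY: "F0 Y \<in> Ob K" using F0 X Y by auto
    have GFX: "G0 (F0 X) \<in> Ob K" and GFY: "G0 (F0 Y) \<in> Ob K" using G0 FX FY by auto
    have FGFX: "F0 (G0 (F0 X)) \<in> Ob K" using F0 GFX .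
    have Ff: "F1 X Y f \<in> Hom K (F0 X) (F0 Y)" using F1 X Y f .
    note GFf = G1[OF FX FY Ff]
    have l: "cmp K (eta Y) f \<in> Hom K X (G0 (F0 Y))" using comp_hom[OF X Y GFY f] eta[OF Y] by blast
    have r: "cmp K (G1 (F0 X) (F0 Y) (F1 X Y f)) (eta X) \<in> Hom K X (G0 (F0 Y))"
      using comp_hom[OF X GFX GFY] eta[OF X] GFf by blast
    have e2: "cmp K (F1 X Y f) (eps (F0 X)) \<in> Hom K (F0 (G0 (F0 X))) (F0 Y)" using comp_hom[OF FGFX FX FY eps[OF FX] Ff] .
    have "F1 X (G0 (F0 Y)) (cmp K (G1 (F0 X) (F0 Y) (F1 X Y f)) (eta X))
        = cmp K (cmp K (epsi (F0 Y)) (cmp K (F1 X Y f) (eps (F0 X)))) (epsi (F0 X))"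
      using F1c[OF X GFX GFY] eta[OF X] GFf by simp
    also have "\<dots> = cmp K (epsi (F0 Y)) (cmp K (cmp K (F1 X Y f) (eps (F0 X))) (epsi (F0 X)))"
      using assoc[OF FX FGFX FY F0[OF GFY] epsi[OF FX] e2 epsi[OF FY]] by simp
    also have "cmp K (cmp K (F1 X Y f) (eps (F0 X))) (epsi (F0 X)) = cmp K (F1 X Y f) (cmp K (eps (F0 X)) (epsi (F0 X)))"
      using assoc[OF FX FGFX FX FY epsi[OF FX] eps[OF FX] Ff] by simp
    also have "\<dots> = F1 X Y f" using ee2[OF FX] id_r[OF FX FY Ff] by simp
    also have "cmp K (epsi (F0 Y)) (F1 X Y f) = F1 X (G0 (F0 Y)) (cmp K (eta Y) f)"
      using F1c[OF X Y GFY f] eta[OF Y] by simp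
    finally show "cmp K (eta Y) f = cmp K (G1 (F0 X) (F0 Y) (F1 X Y f)) (eta X)"
      using faithE[OF X GFY l r] by metis
  next
    fix X assume X: "X\<in>Ob K"
    show "is_iso K (F0 (G0 X)) X (eps X)" unfolding is_iso_def using eps[OF X] epsi[OF X] ee1[OF X] ee2[OF X] by blast
  next
    fix X Y f assume X: "X\<in>Ob K" and Y: "Y\<in>Ob K" and f: "f\<in>Hom K X Y"
    have GX: "F0 (G0 X) \<in> Ob K" and GY: "F0 (G0 Y) \<in> Ob K" using GF0 X Y by auto
    have e2: "cmp K f (eps X) \<in> Hom K (F0 (G0 X)) Y" using comp_hom GX X Y eps f by blast
    have "cmp K (eps Y) (F1 (G0 X) (G0 Y) (G1 X Y f)) = cmp K (eps Y) (cmp K (epsi Y) (cmp K f (eps X)))"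
      using G1[OF X Y f] by simp
    also have "\<dots> = cmp K (cmp K (eps Y) (epsi Y)) (cmp K f (eps X))"
      using assoc[OF GX Y GY Y e2 epsi[OF Y] eps[OF Y]] .
    also have "\<dots> = cmp K f (eps X)" using ee2[OF Y] id_l[OF GX Y e2] by simp
    finally show "cmp K (eps Y) (F1 (G0 X) (G0 Y) (G1 X Y f)) = cmp K f (eps X)" .
  qed
qed

end

locale sig = ext K for K :: "('o,'m,'e) extri" +
  fixes Sig :: "'o \<Rightarrow> 'o" and dl :: "'o \<Rightarrow> 'e"
  assumes h3: "\<forall>X\<in>Ob K. Sig X \<in> Ob K \<and> dl X \<in> Ext K (Sig X) X \<and>
           (\<exists>Z x y. is_zero_obj K Z \<and> real K (dl X) Z x y)"
begin

lemma SigOb: "X\<in>Ob K \<Longrightarrow> Sig X \<in> Ob K" using h3 by blast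
lemma dlE: "X\<in>Ob K \<Longrightarrow> dl X \<in> Ext K (Sig X) X" using h3 by blast
lemma dlR: "X\<in>Ob K \<Longrightarrow> \<exists>Z x y. is_zero_obj K Z \<and> real K (dl X) Z x y" using h3 by blast

lemma zmap: "is_zero_obj K Z \<Longrightarrow> X\<in>Ob K \<Longrightarrow> \<exists>f. f\<in>Hom K Z X"
  unfolding is_zero_obj_def by blast

lemma sig_ex: assumes X: "X\<in>Ob K" and Y: "Y\<in>Ob K" and f: "f\<in>Hom K X Y"
  shows "\<exists>g\<in>Hom K (Sig X) (Sig Y). push K f (dl X) = pull K g (dl Y)"
proof -
  obtain Z x y where Z: "is_zero_obj K Z" and r: "real K (dl X) Z x y" using dlR X by blast
  obtain Z' x' y' where Z': "is_zero_obj K Z'" and r': "real K (dl Y) Z' x' y'" using dlR Y by blast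
  have ZO: "Z\<in>Ob K" "Z'\<in>Ob K" using Z Z' zero_obj_Ob by auto
  obtain b where b: "b\<in>Hom K Z Z'" using zmap Z ZO by blast
  have xy: "x\<in>Hom K X Z" "y \<in> Hom K Z (Sig X)" using real_hom[OF SigOb[OF X] X dlE[OF X] r] by auto
  have xy': "x'\<in>Hom K Y Z'" "y' \<in> Hom K Z' (Sig Y)" using real_hom[OF SigOb[OF Y] Y dlE[OF Y] r'] by auto
  have "cmp K b x = cmp K x' f"
    using zero_to_uniq[OF Z' X comp_hom[OF X ZO(1) ZO(2) xy(1) b] comp_hom[OF X Y ZO(2) f xy'(1)]] .
  from et3[OF X SigOb[OF X] Y SigOb[OF Y] dlE[OF X] dlE[OF Y] f b r r' this]
  show ?thesis by blast
qed

lemma sig_uniq: assumes X: "X\<in>Ob K" and Y: "Y\<in>Ob K" and g: "g\<in>Hom K (Sig X) (Sig Y)" and g': "g'\<in>Hom K (Sig X) (Sig Y)"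
  and e: "pull K g (dl Y) = pull K g' (dl Y)" shows "g = g'"
proof -
  obtain Z' x' y' where Z': "is_zero_obj K Z'" and r': "real K (dl Y) Z' x' y'" using dlR Y by blast
  show ?thesis using pull_inj[OF SigOb[OF Y] Y SigOb[OF X] dlE[OF Y] Z' r' g g' e] .
qed

lemma SM: assumes X: "X\<in>Ob K" and Y: "Y\<in>Ob K" and f: "f\<in>Hom K X Y"
  shows "SigmaMor K Sig dl X Y f \<in> Hom K (Sig X) (Sig Y) \<and> push K f (dl X) = pull K (SigmaMor K Sig dl X Y f) (dl Y)"
proof -
  have "\<exists>!g. g \<in> Hom K (Sig X) (Sig Y) \<and> push K f (dl X) = pull K g (dl Y)"
    using sig_ex[OF X Y f] sig_uniq[OF X Y] by metis
  thus ?thesis unfolding SigmaMor_def by (rule theI')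
qed

lemma SM_eq: assumes X: "X\<in>Ob K" and Y: "Y\<in>Ob K" and f: "f\<in>Hom K X Y"
  and g: "g\<in>Hom K (Sig X) (Sig Y)" and e: "push K f (dl X) = pull K g (dl Y)"
  shows "SigmaMor K Sig dl X Y f = g"
  using SM[OF X Y f] sig_uniq[OF X Y _ g] e by metis

lemma additive: "is_additive_endofunctor K Sig (SigmaMor K Sig dl)"
  unfolding is_additive_endofunctor_def is_endofunctor_def
proof (intro conjI ballI)
  fix X assume X: "X\<in>Ob K"
  show "Sig X \<in> Ob K" using SigOb X .
  show "SigmaMor K Sig dl X X (ident K X) = ident K (Sig X)"
    using SM_eq[OF X X ident_hom[OF X] ident_hom[OF SigOb[OF X]]] push_id[OF SigOb[OF X] X dlE[OF X]]
      pull_id[OF SigOb[OF X] X dlE[OF X]] by simp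
next
  fix X Y f assume X: "X\<in>Ob K" and Y: "Y\<in>Ob K" and f: "f\<in>Hom K X Y"
  show "SigmaMor K Sig dl X Y f \<in> Hom K (Sig X) (Sig Y)" using SM[OF X Y f] by blast
next
  fix X Y Z f g assume X: "X\<in>Ob K" and Y: "Y\<in>Ob K" and Z: "Z\<in>Ob K" and f: "f\<in>Hom K X Y" and g: "g\<in>Hom K Y Z"
  note sf = SM[OF X Y f] and sg = SM[OF Y Z g]
  have SX: "Sig X \<in> Ob K" and SY: "Sig Y \<in> Ob K" and SZ: "Sig Z \<in> Ob K" using SigOb X Y Z by auto
  have "push K (cmp K g f) (dl X) = push K g (push K f (dl X))" using push_comp[OF SX X Y Z f g dlE[OF X]] .
  also have "\<dots> = push K g (pull K (SigmaMor K Sig dl X Y f) (dl Y))" using sf by simp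
  also have "\<dots> = pull K (SigmaMor K Sig dl X Y f) (push K g (dl Y))"
    using push_pull[OF SY SX Y Z g _ dlE[OF Y]] sf by blast
  also have "\<dots> = pull K (SigmaMor K Sig dl X Y f) (pull K (SigmaMor K Sig dl Y Z g) (dl Z))" using sg by simp
  also have "\<dots> = pull K (cmp K (SigmaMor K Sig dl Y Z g) (SigmaMor K Sig dl X Y f)) (dl Z)"
    using pull_comp[OF SZ SY SX Z _ _ dlE[OF Z]] sf sg by metis
  finally show "SigmaMor K Sig dl X Z (cmp K g f) = cmp K (SigmaMor K Sig dl Y Z g) (SigmaMor K Sig dl X Y f)"
    using SM_eq[OF X Z comp_hom[OF X Y Z f g] comp_hom[OF SX SY SZ]] sf sg by blast
next
  fix X Y f g assume X: "X\<in>Ob K" and Y: "Y\<in>Ob K" and f: "f\<in>Hom K X Y" and g: "g\<in>Hom K X Y"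
  note sf = SM[OF X Y f] and sg = SM[OF X Y g]
  have SX: "Sig X \<in> Ob K" and SY: "Sig Y \<in> Ob K" using SigOb X Y by auto
  have "push K (madd K f g) (dl X) = eadd K (push K f (dl X)) (push K g (dl X))" using push_madd[OF SX X Y f g dlE[OF X]] .
  also have "\<dots> = pull K (madd K (SigmaMor K Sig dl X Y f) (SigmaMor K Sig dl X Y g)) (dl Y)"
    using pull_madd[OF SY SX Y _ _ dlE[OF Y]] sf sg by metis
  finally show "SigmaMor K Sig dl X Y (madd K f g) = madd K (SigmaMor K Sig dl X Y f) (SigmaMor K Sig dl X Y g)"
    using SM_eq[OF X Y add_hom[OF X Y f g] add_hom[OF SX SY]] sf sg by blast
qed

lemma full: assumes X: "X\<in>Ob K" and Y: "Y\<in>Ob K" and g: "g\<in>Hom K (Sig X) (Sig Y)"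
  shows "\<exists>f\<in>Hom K X Y. SigmaMor K Sig dl X Y f = g"
proof -
  obtain Z x y where Z: "is_zero_obj K Z" and r: "real K (dl X) Z x y" using dlR X by blast
  obtain Z' x' y' where Z': "is_zero_obj K Z'" and r': "real K (dl Y) Z' x' y'" using dlR Y by blast
  have ZO: "Z\<in>Ob K" "Z'\<in>Ob K" using Z Z' zero_obj_Ob by auto
  obtain b where b: "b\<in>Hom K Z Z'" using zmap Z ZO by blast
  have xy: "x\<in>Hom K X Z" "y \<in> Hom K Z (Sig X)" using real_hom[OF SigOb[OF X] X dlE[OF X] r] by auto
  have xy': "x'\<in>Hom K Y Z'" "y' \<in> Hom K Z' (Sig Y)" using real_hom[OF SigOb[OF Y] Y dlE[OF Y] r'] by auto
  have "cmp K g y = cmp K y' b"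
    using zero_from_uniq[OF Z SigOb[OF Y] comp_hom[OF ZO(1) SigOb[OF X] SigOb[OF Y] xy(2) g] comp_hom[OF ZO(1) ZO(2) SigOb[OF Y] b xy'(2)]] .
  from et3op[OF X SigOb[OF X] Y SigOb[OF Y] dlE[OF X] dlE[OF Y] b g r r' this]
  obtain a where "a\<in>Hom K X Y" "push K a (dl X) = pull K g (dl Y)" by blast
  thus ?thesis using SM_eq[OF X Y _ g] by blast
qed

lemma faithful: assumes X: "X\<in>Ob K" and Y: "Y\<in>Ob K" and f: "f\<in>Hom K X Y" and f': "f'\<in>Hom K X Y"
  and e: "SigmaMor K Sig dl X Y f = SigmaMor K Sig dl X Y f'" shows "f = f'"
proof -
  obtain Z x y where Z: "is_zero_obj K Z" and r: "real K (dl X) Z x y" using dlR X by blast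
  have "push K f (dl X) = push K f' (dl X)" using SM[OF X Y f] SM[OF X Y f'] e by simp
  thus ?thesis using push_inj[OF SigOb[OF X] X Y dlE[OF X] Z r f f'] by blast
qed

lemma esurj: assumes h2: "\<forall>X\<in>Ob K. \<forall>Z. is_zero_obj K Z \<longrightarrow>
           (\<forall>x\<in>Hom K X Z. is_inflation K X Z x) \<and> (\<forall>y\<in>Hom K Z X. is_deflation K Z X y)"
  and Y: "Y\<in>Ob K" shows "\<exists>X\<in>Ob K. \<exists>e. is_iso K (Sig X) Y e"
proof -
  obtain Z where Z: "is_zero_obj K Z" using zero_ex by blast
  have ZO: "Z\<in>Ob K" using Z zero_obj_Ob by auto
  have "is_deflation K Z Y (mzero K Z Y)" using h2 Y Z zero_hom[OF ZO Y] by blast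
  then obtain A d x where A: "A\<in>Ob K" and d: "d\<in>Ext K Y A" and r: "real K d Z x (mzero K Z Y)"
    unfolding is_deflation_def by blast
  obtain Z' x' y' where Z': "is_zero_obj K Z'" and r': "real K (dl A) Z' x' y'" using dlR A by blast
  have ZO': "Z'\<in>Ob K" using Z' zero_obj_Ob by auto
  have SA: "Sig A \<in> Ob K" using SigOb A .
  have xy: "x\<in>Hom K A Z" using real_hom[OF Y A d r] by auto
  have xy': "x'\<in>Hom K A Z'" "y' \<in> Hom K Z' (Sig A)" using real_hom[OF SA A dlE[OF A] r'] by auto
  obtain b where b: "b\<in>Hom K Z Z'" using zmap Z ZO' by blast
  obtain b' where b': "b'\<in>Hom K Z' Z" using zmap Z' ZO by blast
  have "cmp K b x = cmp K x' (ident K A)"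
    using zero_to_uniq[OF Z' A comp_hom[OF A ZO ZO' xy b] comp_hom[OF A A ZO' ident_hom[OF A] xy'(1)]] .
  from et3[OF A Y A SA d dlE[OF A] ident_hom[OF A] b r r' this]
  obtain c where c: "c\<in>Hom K Y (Sig A)" "push K (ident K A) d = pull K c (dl A)" by blast
  have cd: "pull K c (dl A) = d" using c push_id[OF Y A d] by simp
  have "cmp K b' x' = cmp K x (ident K A)"
    using zero_to_uniq[OF Z A comp_hom[OF A ZO' ZO xy'(1) b'] comp_hom[OF A A ZO ident_hom[OF A] xy]] .
  from et3[OF A SA A Y dlE[OF A] d ident_hom[OF A] b' r' r this]
  obtain c' where c': "c'\<in>Hom K (Sig A) Y" "push K (ident K A) (dl A) = pull K c' d" by blast
  have cd': "pull K c' d = dl A" using c' push_id[OF SA A dlE[OF A]] by simp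
  have "pull K (cmp K c c') (dl A) = pull K c' (pull K c (dl A))" using pull_comp[OF SA Y SA A c(1) c'(1) dlE[OF A]] .
  also have "\<dots> = pull K (ident K (Sig A)) (dl A)" using cd cd' pull_id[OF SA A dlE[OF A]] by simp
  finally have i1: "cmp K c c' = ident K (Sig A)"
    using pull_inj[OF SA A SA dlE[OF A] Z' r' comp_hom[OF SA Y SA c'(1) c(1)] ident_hom[OF SA]] by blast
  have "pull K (cmp K c' c) d = pull K c (pull K c' d)" using pull_comp[OF Y SA Y A c'(1) c(1) d] .
  also have "\<dots> = pull K (ident K Y) d" using cd cd' pull_id[OF Y A d] by simp
  finally have i2: "cmp K c' c = ident K Y"
    using pull_inj[OF Y A Y d Z r comp_hom[OF Y SA Y c(1) c'(1)] ident_hom[OF Y]] by blast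
  have "is_iso K (Sig A) Y c'" unfolding is_iso_def using c c' i1 i2 by blast
  thus ?thesis using A by blast
qed

end

theorem proposition3p7:
  fixes K :: "('o,'m,'e) extri" and Sig :: "'o \<Rightarrow> 'o" and dl :: "'o \<Rightarrow> 'e"
  assumes "extriangulated K"
    and "\<forall>X\<in>Ob K. \<forall>Z. is_zero_obj K Z \<longrightarrow>
           (\<forall>x\<in>Hom K X Z. is_inflation K X Z x) \<and> (\<forall>y\<in>Hom K Z X. is_deflation K Z X y)"
    and "\<forall>X\<in>Ob K. Sig X \<in> Ob K \<and> dl X \<in> Ext K (Sig X) X \<and>
           (\<exists>Z x y. is_zero_obj K Z \<and> real K (dl X) Z x y)"
  shows "is_additive_endofunctor K Sig (SigmaMor K Sig dl) \<and>
         is_autoequivalence K Sig (SigmaMor K Sig dl)"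
proof -
  interpret sig K Sig dl using assms(1,3) by (unfold_locales; blast)
  have a: "is_additive_endofunctor K Sig (SigmaMor K Sig dl)" by (rule additive)
  have "is_autoequivalence K Sig (SigmaMor K Sig dl)"
    apply (rule equiv_crit)
    using a unfolding is_additive_endofunctor_def apply blast
      apply (erule (2) full)
     apply (erule (4) faithful)
    apply (erule esurj[OF assms(2)])
    done
  thus ?thesis using a by blast
qed

end
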